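(* Let $F$ be a field, $U,V$ finite-dimensional $F$-vector spaces of dimensions $n$ and $m$, and $A:U\times U\to V$ an alternating bilinear map whose image spans $V$. If $m>2$ and $n>m+1$, then there exists a basis $\{u_1,\dots,u_n\}$ of $U$, ordered $u_1<\dots<u_n$, such that the associated set $\mathcal{B}$ (constructed as in the context) is either not a tree of height one, or else satisfies all of the following: (1) $\mathcal{B}=\{\{1,2\},\{1,3\},\dots,\{1,m+1\}\}$; (2) $A(u_1,u_i)=0$ for all $i$ with $m+2\le i\le n$; (3) $A(u_i,u_j)=0$ for all $i,j$ with $m+1<i<j\le n$; (4) $A(u_i,u_j)\in\operatorname{span}\{A(u_1,u_i)\}$ for all $i,j$ with $2\le i\le m+1<j\le n$.
   Context: Given a basis $u_1<\dots<u_n$ of $U$: $\mathcal{Y}$ is the set of $2$-element subsets of $\{1,\dots,n\}$, totally ordered by $\{i,j\}<\{r,s\}$ iff $\max\{i,j\}<\max\{r,s\}$, or the maxima are equal to $a$ and the remaining element of $\{i,j\}\setminus\{a\}$ is smaller than that of $\{r,s\}\setminus\{a\}$. Starting from $\mathcal{B}_0=\emptyset,B_0=\emptyset$, inductively let $\{i,j\}$ ($i<j$) be the least element of $\mathcal{Y}$ with $A(u_i,u_j)\notin\operatorname{span}(B_k)$ and set $\mathcal{B}_{k+1}=\mathcal{B}_k\cup\{\{i,j\}\}$, $B_{k+1}=B_k\cup\{A(u_i,u_j)\}$; stop at $k=m$ and put $\mathcal{B}=\mathcal{B}_m$. The set $\mathcal{B}$ is a tree of height one if there is an $i\in\{1,\dots,n\}$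 with $i\in\{j,l\}$ for every $\{j,l\}\in\mathcal{B}$. *)

theory Defs
  imports Main "HOL.Vector_Spaces"
begin

text \<open>Pairs \<open>{i,j}\<close> with \<open>i < j\<close> are represented as \<open>(i,j)\<close>.  The set \<open>\<Y>\<close>:\<close>
definition Ypairs :: "nat \<Rightarrow> (nat \<times> nat) set" where
  "Ypairs n = {(i, j). 1 \<le> i \<and> i < j \<and> j \<le> n}"

definition ylt :: "nat \<times> nat \<Rightarrow> nat \<times> nat \<Rightarrow> bool" where
  "ylt p q \<longleftrightarrow> snd p < snd q \<or> (snd p = snd q \<and> fst p < fst q)"

definition candidates ::
  "('f::field \<Rightarrow> 'v::ab_group_add \<Rightarrow> 'v) \<Rightarrow> ('u \<Rightarrow> 'u \<Rightarrow> 'v) \<Rightarrow> (nat \<Rightarrow> 'u) \<Rightarrow> nat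
     \<Rightarrow> (nat \<times> nat) set \<Rightarrow> (nat \<times> nat) set" where
  "candidates sV A u n Bs =
     {p \<in> Ypairs n. A (u (fst p)) (u (snd p))
        \<notin> module.span sV ((\<lambda>q. A (u (fst q)) (u (snd q))) ` Bs)}"

definition greedy_step ::
  "('f::field \<Rightarrow> 'v::ab_group_add \<Rightarrow> 'v) \<Rightarrow> ('u \<Rightarrow> 'u \<Rightarrow> 'v) \<Rightarrow> (nat \<Rightarrow> 'u) \<Rightarrow> nat
     \<Rightarrow> (nat \<times> nat) set \<Rightarrow> (nat \<times> nat) set" where
  "greedy_step sV A u n Bs =
     (let C = candidates sV A u n Bs in
      if C = {} then Bs
      else Bs \<union> {THE p. p \<in> C \<and> (\<forall>q\<in>C. q \<noteq> p \<longrightarrow> ylt p q)})"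

text \<open>The set \<open>\<B>\<close>: each productive step adds a new pair of \<open>\<Y>\<close>, so after
  \<open>card \<Y>\<close> iterations the construction has stopped (further steps are the identity).\<close>
definition greedy_B ::
  "('f::field \<Rightarrow> 'v::ab_group_add \<Rightarrow> 'v) \<Rightarrow> ('u \<Rightarrow> 'u \<Rightarrow> 'v) \<Rightarrow> (nat \<Rightarrow> 'u) \<Rightarrow> nat
     \<Rightarrow> (nat \<times> nat) set" where
  "greedy_B sV A u n = (greedy_step sV A u n ^^ card (Ypairs n)) {}"

definition tree_height_one :: "nat \<Rightarrow> (nat \<times> nat) set \<Rightarrow> bool" where
  "tree_height_one n Bs \<longleftrightarrow> (\<exists>i\<in>{1..n}. \<forall>p\<in>Bs. i = fst p \<or> i = snd p)"

end

theory Submission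
  imports Defs
begin


lemma ylt_wf: "wf {(q, p). ylt q p}"
proof -
  have "{(q, p). ylt q p} = inv_image (less_than <*lex*> less_than) (\<lambda>p. (snd p, fst p))"
    by (auto simp: ylt_def)
  then show ?thesis by (simp add: wf_lex_prod)
qed

lemma ylt_trans: "ylt p q \<Longrightarrow> ylt q r \<Longrightarrow> ylt p r"
  by (auto simp: ylt_def)

lemma ylt_asym: "ylt p q \<Longrightarrow> \<not> ylt q p"
  by (auto simp: ylt_def)

lemma ylt_total: "p \<noteq> q \<Longrightarrow> ylt p q \<or> ylt q p"
  by (cases p; cases q) (auto simp: ylt_def)

lemma finite_Ypairs: "finite (Ypairs n)"
proof -
  have "Ypairs n \<subseteq> {0..n} \<times> {0..n}" by (auto simp: Ypairs_def)
  then show ?thesis by (rule finite_subset) auto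
qed

context
  fixes sV :: "'f::field \<Rightarrow> 'v::ab_group_add \<Rightarrow> 'v"
    and A :: "'u \<Rightarrow> 'u \<Rightarrow> 'v" and u :: "nat \<Rightarrow> 'u" and n :: nat
  assumes vsV: "vector_space sV"
begin

interpretation V: vector_space sV by (rule vsV)

definition "gval p = A (u (fst p)) (u (snd p))"
definition "gD p = {q \<in> Ypairs n. ylt q p}"
definition "gG = {p \<in> Ypairs n. gval p \<notin> V.span (gval ` gD p)}"

lemma gkey: "V.span (gval ` gD p) = V.span (gval ` (gG \<inter> gD p))"
proof (induction p rule: wf_induct[OF ylt_wf])
  case (1 p)
  show ?case
  proof
    show "V.span (gval ` (gG \<inter> gD p)) \<subseteq> V.span (gval ` gD p)"
      by (intro V.span_mono) auto
    show "V.span (gval ` gD p) \<subseteq> V.span (gval ` (gG \<inter> gD p))"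
    proof (rule V.span_minimal[OF _ V.subspace_span], rule subsetI)
      fix v assume "v \<in> gval ` gD p"
      then obtain q where q: "q \<in> gD p" "v = gval q" by auto
      show "v \<in> V.span (gval ` (gG \<inter> gD p))"
      proof (cases "q \<in> gG")
        case True
        then show ?thesis using q by (intro V.span_base) auto
      next
        case False
        have qY: "q \<in> Ypairs n" and qp: "ylt q p" using q by (auto simp: gD_def)
        then have "gval q \<in> V.span (gval ` gD q)" using False by (auto simp: gG_def)
        also have "\<dots> = V.span (gval ` (gG \<inter> gD q))" using 1[rule_format, of q] qp by simp
        also have "\<dots> \<subseteq> V.span (gval ` (gG \<inter> gD p))"
          using qp by (intro V.span_mono) (auto simp: gD_def intro: ylt_trans)
        finally show ?thesis using q by simp
      qed
    qed
  qed
qed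

definition "dclosed D0 \<longleftrightarrow> D0 \<subseteq> Ypairs n \<and> (\<forall>p\<in>D0. \<forall>q\<in>Ypairs n. ylt q p \<longrightarrow> q \<in> D0)"

lemma in_span_S:
  assumes "dclosed D0" "p \<in> Ypairs n" "p \<notin> gG" "gG \<inter> gD p \<subseteq> D0"
  shows "gval p \<in> V.span (gval ` (gG \<inter> D0))"
proof -
  have "gval p \<in> V.span (gval ` gD p)" using assms by (auto simp: gG_def)
  also have "\<dots> = V.span (gval ` (gG \<inter> gD p))" by (rule gkey)
  also have "\<dots> \<subseteq> V.span (gval ` (gG \<inter> D0))" using assms(4) by (intro V.span_mono) auto
  finally show ?thesis .
qed

lemma in_D0_span:
  assumes "dclosed D0" "p \<in> D0"
  shows "gval p \<in> V.span (gval ` (gG \<inter> D0))"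
proof (cases "p \<in> gG")
  case True then show ?thesis using assms by (intro V.span_base) auto
next
  case False
  show ?thesis
    using assms False by (intro in_span_S) (auto simp: dclosed_def gD_def)
qed

lemma cand_eq: "candidates sV A u n S = {p \<in> Ypairs n. gval p \<notin> V.span (gval ` S)}"
  by (simp add: candidates_def gval_def[abs_def] image_def)

lemma step_done:
  assumes "dclosed D0" "gG \<subseteq> D0"
  shows "greedy_step sV A u n (gG \<inter> D0) = gG \<inter> D0"
proof -
  have "candidates sV A u n (gG \<inter> D0) = {}"
  proof -
    { fix p assume p: "p \<in> Ypairs n" "gval p \<notin> V.span (gval ` (gG \<inter> D0))"
      have False
      proof (cases "p \<in> D0")
        case True then show False using in_D0_span[OF assms(1)] p by blast
      next
        case False
        then have "p \<notin> gG" using assms by auto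
        then show False using in_span_S[OF assms(1) p(1)] assms(2) p(2) by blast
      qed }
    then show ?thesis by (auto simp: cand_eq)
  qed
  then show ?thesis by (simp add: greedy_step_def)
qed

lemma step_add:
  assumes dc: "dclosed D0" and gin: "g \<in> gG - D0" and gmin: "\<forall>q\<in>gG - D0. q \<noteq> g \<longrightarrow> ylt g q"
  shows "greedy_step sV A u n (gG \<inter> D0) = gG \<inter> (D0 \<union> {q \<in> Ypairs n. ylt q g \<or> q = g})"
    and "dclosed (D0 \<union> {q \<in> Ypairs n. ylt q g \<or> q = g})"
    and "greedy_step sV A u n (gG \<inter> D0) = insert g (gG \<inter> D0)"
proof -
  let ?S = "gG \<inter> D0"
  let ?C = "candidates sV A u n ?S"
  have gY: "g \<in> Ypairs n" using gin by (auto simp: gG_def)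
  have SD: "?S \<subseteq> gD g"
  proof
    fix s assume s: "s \<in> ?S"
    then have "s \<noteq> g" using gin by auto
    moreover have "\<not> ylt g s" using s dc gin gY by (auto simp: dclosed_def)
    ultimately have "ylt s g" using ylt_total by blast
    then show "s \<in> gD g" using s dc by (auto simp: gD_def dclosed_def)
  qed
  have gC: "g \<in> ?C"
  proof -
    have "gval g \<notin> V.span (gval ` gD g)" using gin by (auto simp: gG_def)
    moreover have "V.span (gval ` ?S) \<subseteq> V.span (gval ` gD g)" using SD by (intro V.span_mono) auto
    ultimately show ?thesis using gY by (auto simp: cand_eq)
  qed
  have gleast: "\<forall>p\<in>?C. p \<noteq> g \<longrightarrow> ylt g p"
  proof (intro ballI impI)
    fix p assume pC: "p \<in> ?C" and pg: "p \<noteq> g"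
    show "ylt g p"
    proof (rule ccontr)
      assume "\<not> ylt g p"
      then have pg': "ylt p g" using ylt_total pg by blast
      have pY: "p \<in> Ypairs n" and pns: "gval p \<notin> V.span (gval ` ?S)" using pC by (auto simp: cand_eq)
      have pD0: "p \<notin> D0" using in_D0_span[OF dc] pns by blast
      show False
      proof (cases "p \<in> gG")
        case True
        then show False using gmin pD0 pg pg' ylt_asym by blast
      next
        case False
        have "gG \<inter> gD p \<subseteq> D0"
        proof
          fix q assume q: "q \<in> gG \<inter> gD p"
          then have "ylt q g" using pg' by (auto simp: gD_def intro: ylt_trans)
          show "q \<in> D0"
          proof (rule ccontr)
            assume "q \<notin> D0"
            moreover have "q \<noteq> g" using \<open>ylt q g\<close> ylt_asym by blast
            ultimately have "ylt g q" using gmin q by blast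
            then show False using \<open>ylt q g\<close> ylt_asym by blast
          qed
        qed
        then show False using in_span_S[OF dc pY False] pns by blast
      qed
    qed
  qed
  have the_eq: "(THE p. p \<in> ?C \<and> (\<forall>q\<in>?C. q \<noteq> p \<longrightarrow> ylt p q)) = g"
  proof (rule the_equality)
    show "g \<in> ?C \<and> (\<forall>q\<in>?C. q \<noteq> g \<longrightarrow> ylt g q)" using gC gleast by blast
  next
    fix p assume p: "p \<in> ?C \<and> (\<forall>q\<in>?C. q \<noteq> p \<longrightarrow> ylt p q)"
    show "p = g"
    proof (rule ccontr)
      assume "p \<noteq> g"
      then have "ylt p g" "ylt g p" using p gC gleast by auto
      then show False using ylt_asym by blast
    qed
  qed
  show ins: "greedy_step sV A u n ?S = insert g ?S"
    using gC the_eq by (auto simp: greedy_step_def Let_def)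
  show "greedy_step sV A u n ?S = gG \<inter> (D0 \<union> {q \<in> Ypairs n. ylt q g \<or> q = g})"
    unfolding ins using gin gmin gY by (auto dest: ylt_asym)
  show "dclosed (D0 \<union> {q \<in> Ypairs n. ylt q g \<or> q = g})"
    using dc gY by (auto simp: dclosed_def intro: ylt_trans)
qed

lemma gG_sub: "gG \<subseteq> Ypairs n" by (auto simp: gG_def)

lemma iter_inv:
  "\<exists>D0. dclosed D0 \<and> (greedy_step sV A u n ^^ k) {} = gG \<inter> D0 \<and>
     ((greedy_step sV A u n ^^ k) {} = gG \<or> k \<le> card ((greedy_step sV A u n ^^ k) {}))"
proof (induction k)
  case 0
  show ?case by (rule exI[of _ "{}"]) (auto simp: dclosed_def)
next
  case (Suc k)
  then obtain D0 where dc: "dclosed D0" and S: "(greedy_step sV A u n ^^ k) {} = gG \<inter> D0"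
    and cs: "(greedy_step sV A u n ^^ k) {} = gG \<or> k \<le> card ((greedy_step sV A u n ^^ k) {})"
    by blast
  show ?case
  proof (cases "gG \<subseteq> D0")
    case True
    then show ?thesis using step_done[OF dc True] S dc by (intro exI[of _ D0]) auto
  next
    case False
    then have ne: "gG - D0 \<noteq> {}" by auto
    obtain g where g: "g \<in> gG - D0" and gm: "\<And>y. (y, g) \<in> {(q, p). ylt q p} \<Longrightarrow> y \<notin> gG - D0"
      using wfE_min[OF ylt_wf, of _ "gG - D0"] ne by blast
    have gmin: "\<forall>q\<in>gG - D0. q \<noteq> g \<longrightarrow> ylt g q" using gm ylt_total by blast
    note st = step_add[OF dc g gmin]
    have fin: "finite (gG \<inter> D0)" using finite_subset[OF _ finite_Ypairs] gG_sub by blast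
    have "gG \<inter> D0 \<noteq> gG" using g by auto
    then have "k \<le> card (gG \<inter> D0)" using cs S by auto
    moreover have "card (insert g (gG \<inter> D0)) = Suc (card (gG \<inter> D0))" using fin g by simp
    ultimately show ?thesis using st S by (intro exI[of _ "D0 \<union> {q \<in> Ypairs n. ylt q g \<or> q = g}"]) auto
  qed
qed

lemma greedy_B_char: "greedy_B sV A u n = gG"
proof -
  obtain D0 where S: "greedy_B sV A u n = gG \<inter> D0"
    and cs: "greedy_B sV A u n = gG \<or> card (Ypairs n) \<le> card (greedy_B sV A u n)"
    using iter_inv[of "card (Ypairs n)"] unfolding greedy_B_def by blast
  show ?thesis
  proof (cases "greedy_B sV A u n = gG")
    case False
    then have "card (Ypairs n) \<le> card (greedy_B sV A u n)" using cs by auto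
    moreover have "greedy_B sV A u n \<subseteq> Ypairs n" using S gG_sub by auto
    ultimately have "greedy_B sV A u n = Ypairs n"
      using card_seteq[OF finite_Ypairs] by blast
    then show ?thesis using S gG_sub by auto
  qed
qed

end



definition ind2 :: "('f::field \<Rightarrow> 'v::ab_group_add \<Rightarrow> 'v) \<Rightarrow> 'v \<Rightarrow> 'v \<Rightarrow> bool" where
  "ind2 s a b \<longleftrightarrow> (\<forall>c d. s c a + s d b = 0 \<longrightarrow> c = 0 \<and> d = 0)"

definition ind3 :: "('f::field \<Rightarrow> 'v::ab_group_add \<Rightarrow> 'v) \<Rightarrow> 'v \<Rightarrow> 'v \<Rightarrow> 'v \<Rightarrow> bool" where
  "ind3 s a b w \<longleftrightarrow> (\<forall>c d e. s c a + s d b + s e w = 0 \<longrightarrow> c = 0 \<and> d = 0 \<and> e = 0)"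

context vector_space begin

lemma solve3:
  assumes "c *s a + d *s b + e *s w = 0" "e \<noteq> 0"
  shows "w = (- c / e) *s a + (- d / e) *s b"
proof -
  have "e *s w = - (c *s a + d *s b)" using assms(1) by (simp add: add_eq_0_iff add.commute)
  then have "inverse e *s (e *s w) = inverse e *s (- (c *s a + d *s b))" by simp
  then show ?thesis using assms(2) by (simp add: scale_right_distrib scale_right_diff_distrib divide_inverse mult.commute)
qed

lemma solve2:
  assumes "c *s a + d *s b = 0" "c \<noteq> 0"
  shows "a = (- d / c) *s b"
proof -
  have "c *s a = - (d *s b)" using assms(1) by (simp add: add_eq_0_iff add.commute)
  then have "inverse c *s (c *s a) = inverse c *s (- (d *s b))" by simp
  then show ?thesis using assms(2) by (simp add: divide_inverse mult.commute)
qed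

lemma ind2_sym: "ind2 scale a b \<Longrightarrow> ind2 scale b a"
  unfolding ind2_def by (metis add.commute)

lemma ind2_nz: "ind2 scale a b \<Longrightarrow> a \<noteq> 0"
  unfolding ind2_def by (metis add_0 one_neq_zero scale_zero_left scale_zero_right)

lemma not_ind2_line:
  assumes "\<not> ind2 scale b c" "c \<noteq> 0"
  shows "\<exists>k. b = k *s c"
proof -
  obtain s t where st: "s *s b + t *s c = 0" "\<not> (s = 0 \<and> t = 0)" using assms(1) unfolding ind2_def by blast
  have "s \<noteq> 0"
  proof
    assume "s = 0"
    then have "t *s c = 0" using st by simp
    then show False using st \<open>s = 0\<close> assms(2) by simp
  qed
  then show ?thesis using solve2[OF st(1)] by blast
qed

lemma ind2_line_plus:
  assumes "ind2 scale a b"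
  shows "ind2 scale (k *s a + b) a"
  unfolding ind2_def
proof (intro allI impI)
  fix c d assume "c *s (k *s a + b) + d *s a = 0"
  then have "(c * k + d) *s a + c *s b = 0" by (simp add: scale_right_distrib scale_left_distrib algebra_simps)
  then have "c * k + d = 0 \<and> c = 0" using assms unfolding ind2_def by blast
  then show "c = 0 \<and> d = 0" by auto
qed

lemma ind3_ind2: "ind3 scale a b w \<Longrightarrow> ind2 scale a b"
  unfolding ind3_def ind2_def by (metis add_0_right scale_zero_left)

lemma ind3_perm: "ind3 scale a b w \<Longrightarrow> ind3 scale a w b"
  unfolding ind3_def by (metis add.assoc add.commute)

lemma ind3_perm2: "ind3 scale a b w \<Longrightarrow> ind3 scale b a w"
  unfolding ind3_def by (metis add.commute)

lemma ind2_scale_left: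
  assumes "ind2 scale a b" "k \<noteq> 0" shows "ind2 scale (k *s a) b"
  using assms unfolding ind2_def by (metis mult_eq_0_iff scale_scale)

end

locale AS = U: vector_space sU + V: vector_space sV
  for sU :: "'f::field \<Rightarrow> 'u::ab_group_add \<Rightarrow> 'u" and sV :: "'f \<Rightarrow> 'v::ab_group_add \<Rightarrow> 'v"
  + fixes A :: "'u \<Rightarrow> 'u \<Rightarrow> 'v"
  assumes lin1: "\<And>x. Vector_Spaces.linear sU sV (A x)"
    and lin2: "\<And>y. Vector_Spaces.linear sU sV (\<lambda>x. A x y)"
    and alt: "\<And>x. A x x = 0"
begin

lemma A_add2: "A x (y + z) = A x y + A x z" using lin1[of x] unfolding linear_iff by blast
lemma A_add1: "A (x + y) z = A x z + A y z" using lin2[of z] unfolding linear_iff by blast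
lemma A_scale2: "A x (sU c y) = sV c (A x y)" using lin1[of x] unfolding linear_iff by blast
lemma A_scale1: "A (sU c x) y = sV c (A x y)" using lin2[of y] unfolding linear_iff by blast
lemma A_zero2[simp]: "A x 0 = 0" using A_scale2[of x 0 0] by simp
lemma A_zero1[simp]: "A 0 x = 0" using A_scale1[of 0 0 x] by simp
lemma A_diff2: "A x (y - z) = A x y - A x z" using A_add2[of x "y - z" z] by (simp add: algebra_simps)
lemma A_diff1: "A (x - y) z = A x z - A y z" using A_add1[of "x - y" y z] by (simp add: algebra_simps)
lemma A_antisym: "A y x = - A x y"
proof -
  have "A x x + A y x + (A x y + A y y) = 0" using alt[of "x+y"] by (simp only: A_add1 A_add2)
  then have "A x y + A y x = 0" by (simp add: alt add.commute)
  then show ?thesis using neg_eq_iff_add_eq_0[of "A x y" "A y x"] by simp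
qed

lemma R_sub: "V.subspace (range (A x))"
proof (rule V.subspaceI)
  show "0 \<in> range (A x)" using A_zero2[of x] by (metis rangeI)
  fix a b assume "a \<in> range (A x)" "b \<in> range (A x)"
  then obtain p q where "a = A x p" "b = A x q" by auto
  then show "a + b \<in> range (A x)" by (metis A_add2 rangeI)
next
  fix c a assume "a \<in> range (A x)"
  then obtain p where "a = A x p" by auto
  then show "sV c a \<in> range (A x)" by (metis A_scale2 rangeI)
qed

lemma R_add: "a \<in> range (A x) \<Longrightarrow> b \<in> range (A x) \<Longrightarrow> a + b \<in> range (A x)"
  using V.subspace_add[OF R_sub] by blast
lemma R_diff: "a \<in> range (A x) \<Longrightarrow> b \<in> range (A x) \<Longrightarrow> a - b \<in> range (A x)"
  using V.subspace_diff[OF R_sub] by blast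
lemma R_neg: "a \<in> range (A x) \<Longrightarrow> - a \<in> range (A x)"
  using V.subspace_neg[OF R_sub] by blast
lemma R_0: "0 \<in> range (A x)"
  using V.subspace_0[OF R_sub] by blast

lemma prop_pivot:
  assumes ind: "ind2 sV (A x z) (A x p)" and pc: "A k p = sV c (A x p)"
    and H: "\<And>z. A x z \<noteq> 0 \<Longrightarrow> \<exists>e. A k z = sV e (A x z)"
  shows "A k z = sV c (A x z)"
proof -
  obtain d where d: "A k z = sV d (A x z)" using H V.ind2_nz[OF ind] by blast
  have "A x (z + p) \<noteq> 0"
  proof
    assume "A x (z + p) = 0"
    then have "sV 1 (A x z) + sV 1 (A x p) = 0" by (simp add: A_add2)
    then show False using ind unfolding ind2_def by (metis one_neq_zero)
  qed
  then obtain e where e: "A k (z + p) = sV e (A x (z + p))" using H by blast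
  have "sV (d - e) (A x z) + sV (c - e) (A x p) = 0"
    using e d pc by (simp add: A_add2 V.scale_left_diff_distrib V.scale_right_distrib algebra_simps)
  then have "d - e = 0 \<and> c - e = 0" using ind unfolding ind2_def by blast
  then show ?thesis using d by simp
qed

lemma prop_lemma:
  assumes ind: "ind2 sV (A x z0) (A x z1)"
    and H: "\<And>z. A x z \<noteq> 0 \<Longrightarrow> \<exists>e. A k z = sV e (A x z)"
  shows "\<exists>c. \<forall>z. A k z = sV c (A x z)"
proof -
  obtain c where c0: "A k z0 = sV c (A x z0)" using H V.ind2_nz[OF ind] by blast
  have c1: "A k z1 = sV c (A x z1)" using prop_pivot[OF V.ind2_sym[OF ind] c0 H] .
  have "A k z = sV c (A x z)" for z
  proof (cases "ind2 sV (A x z) (A x z0)")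
    case True then show ?thesis using prop_pivot[OF True c0 H] by blast
  next
    case F0: False
    show ?thesis
    proof (cases "ind2 sV (A x z) (A x z1)")
      case True then show ?thesis using prop_pivot[OF True c1 H] by blast
    next
      case F1: False
      have "A x z = 0"
      proof (rule ccontr)
        assume nz: "A x z \<noteq> 0"
        have n0: "A x z0 \<noteq> 0" using V.ind2_nz[OF ind] .
        have n1: "A x z1 \<noteq> 0" using V.ind2_nz[OF V.ind2_sym[OF ind]] .
        obtain e where e: "A x z = sV e (A x z0)" using V.not_ind2_line[OF F0 n0] by blast
        obtain f where f: "A x z = sV f (A x z1)" using V.not_ind2_line[OF F1 n1] by blast
        have "sV e (A x z0) + sV (- f) (A x z1) = 0" using e f by simp
        then have "e = 0" using ind unfolding ind2_def by blast
        then show False using e nz by simp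
      qed
      then have "A x (z + z1) = A x z1" by (simp add: A_add2)
      then have "ind2 sV (A x (z + z1)) (A x z0)" using V.ind2_sym[OF ind] by simp
      then have "A k (z + z1) = sV c (A x (z + z1))" using prop_pivot[OF _ c0 H] by blast
      then have "A k z + A k z1 = sV c (A x z1)" using \<open>A x (z + z1) = A x z1\<close> by (simp add: A_add2)
      then show ?thesis using c1 \<open>A x z = 0\<close> by simp
    qed
  qed
  then show ?thesis by blast
qed

end

locale ASNT = AS +
  assumes NT: "\<And>x y z. \<not> ind3 sV (A x y) (A x z) (A y z)"
begin

lemma L1:
  assumes "ind2 sV (A x p) (A x q)"
  shows "\<exists>s t. A p q = sV s (A x p) + sV t (A x q)"
proof -
  obtain c d e where cde: "sV c (A x p) + sV d (A x q) + sV e (A p q) = 0" "\<not> (c = 0 \<and> d = 0 \<and> e = 0)"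
    using NT[of x p q] unfolding ind3_def by blast
  have "e \<noteq> 0"
  proof
    assume "e = 0"
    then have "sV c (A x p) + sV d (A x q) = 0" using cde by simp
    then show False using assms cde \<open>e = 0\<close> unfolding ind2_def by blast
  qed
  then show ?thesis using V.solve3[OF cde(1)] by blast
qed

lemma L1R:
  assumes "ind2 sV (A x p) (A x q)"
  shows "A p q \<in> range (A x)"
proof -
  obtain s t where "A p q = sV s (A x p) + sV t (A x q)" using L1[OF assms] by blast
  then have "A p q = A x (sU s p + sU t q)" by (simp add: A_add2 A_scale2)
  then show ?thesis by blast
qed

lemma M2_aux_line:
  assumes spans: "V.span {A x y | x y. True} = UNIV"
    and notline: "\<And>a. \<not> (\<forall>v. \<exists>k. v = sV k a)"
  shows "\<exists>x y z. ind2 sV (A x y) (A x z)"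
proof (rule ccontr)
  assume H0: "\<not> ?thesis"
  then have H: "\<And>x y z. \<not> ind2 sV (A x y) (A x z)" by blast
  have ex0: "\<exists>x0 y0. A x0 y0 \<noteq> 0"
  proof (rule ccontr)
    assume "\<not> ?thesis"
    then have "{A x y | x y. True} = {0}" by auto
    then have "V.span {A x y | x y. True} = {0}" by simp
    then show False using spans notline[of 0] by auto
  qed
  then obtain x0 y0 where a0: "A x0 y0 \<noteq> 0" by blast
  define a where "a = A x0 y0"
  have line: "A p q \<in> V.span {A p r}" if nz: "A p r \<noteq> 0" for p q r
  proof -
    obtain k where "A p q = sV k (A p r)" using V.not_ind2_line[OF H[of p q r] nz] by blast
    then show ?thesis by (simp add: V.span_scale V.span_base)
  qed
  have x0q: "A x0 q \<in> V.span {a}" for q using line[of x0 y0 q] a0 by (simp add: a_def)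
  have y0q: "A y0 q \<in> V.span {a}" for q
  proof -
    have "A y0 x0 = - a" by (simp add: a_def A_antisym[of y0 x0])
    then have "A y0 q \<in> V.span {- a}" using line[of y0 x0 q] a0 by (simp add: a_def)
    moreover have "V.span {- a} \<subseteq> V.span {a}" by (intro V.span_minimal) (auto intro: V.span_neg V.span_base)
    ultimately show ?thesis by blast
  qed
  have all: "A p q \<in> V.span {a}" for p q
  proof (cases "A p x0 \<noteq> 0")
    case True
    then have "A p q \<in> V.span {A p x0}" by (rule line)
    moreover have "A p x0 \<in> V.span {a}" using x0q[of p] A_antisym[of p x0] V.span_neg by fastforce
    ultimately show ?thesis using V.span_mono[of "{A p x0}" "V.span {a}"] V.span_span by auto
  next
    case False
    show ?thesis
    proof (cases "A p y0 \<noteq> 0")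
      case True
      then have "A p q \<in> V.span {A p y0}" by (rule line)
      moreover have "A p y0 \<in> V.span {a}" using y0q[of p] A_antisym[of p y0] V.span_neg by fastforce
      ultimately show ?thesis using V.span_mono[of "{A p y0}" "V.span {a}"] V.span_span by auto
    next
      case False2: False
      have "A (p + x0) y0 = a" using False2 by (simp add: A_add1 a_def)
      then have "A (p + x0) q \<in> V.span {a}" using line[of "p + x0" y0 q] a0 by (simp add: a_def)
      moreover have "A p q = A (p + x0) q - A x0 q" by (simp add: A_add1)
      ultimately show ?thesis using x0q[of q] V.span_diff by metis
    qed
  qed
  have "UNIV \<subseteq> V.span {a}"
    using spans V.span_minimal[of "{A x y | x y. True}" "V.span {a}"] all by auto
  then have "\<forall>v. \<exists>k. v = sV k a" by (auto simp: V.span_singleton)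
  then show False using notline by blast
qed

lemma M2_C0:
  assumes ab: "ind2 sV (A x y) (A x z)"
  shows "A p y \<in> range (A x)"
proof (cases "ind2 sV (A x p) (A x y)")
  case True then show ?thesis by (rule L1R)
next
  case False
  have a0: "A x y \<noteq> 0" using V.ind2_nz[OF ab] .
  obtain k where k: "A x p = sV k (A x y)" using V.not_ind2_line[OF False a0] by blast
  have "A x (p + z) = sV k (A x y) + A x z" by (simp add: A_add2 k)
  then have "ind2 sV (A x (p + z)) (A x y)" using V.ind2_line_plus[OF ab] by simp
  then have "A (p + z) y \<in> range (A x)" by (rule L1R)
  moreover have "A z y \<in> range (A x)" using V.ind2_sym[OF ab] by (rule L1R)
  moreover have "A p y = A (p + z) y - A z y" by (simp add: A_add1)
  ultimately show ?thesis using R_diff by metis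
qed

lemma M2_main:
  assumes ab: "ind2 sV (A x y) (A x z)"
  shows "A p q \<in> range (A x)"
proof -
  have ba: "ind2 sV (A x z) (A x y)" using V.ind2_sym[OF ab] .
  have T0: "A p t \<in> range (A x)" if "t \<in> {0, y, z}" for p t
    using that M2_C0[OF ab] M2_C0[OF ba] R_0 by auto
  have T1: "A t p \<in> range (A x)" if "t \<in> {0, y, z}" for p t
    using T0[OF that, of p] A_antisym[of t p] R_neg by metis
  have shift: "A p q \<in> range (A x)"
    if "A (p + s) (q + t) \<in> range (A x)" "s \<in> {0, y, z}" "t \<in> {0, y, z}" for p q s t
  proof -
    have "A p q = A (p + s) (q + t) - A p t - A s q - A s t" by (simp add: A_add1 A_add2)
    then show ?thesis using that T0 T1 R_diff by metis
  qed
  have caseP: "A p k \<in> range (A x)" if "A x p \<noteq> 0" "A x k = 0" for p k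
  proof (cases "ind2 sV (A x p) (A x y)")
    case True
    have "A x (k + y) = A x y" using that by (simp add: A_add2)
    then have "A p (k + y) \<in> range (A x)" using True L1R by metis
    then show ?thesis using shift[of p 0 k y] by simp
  next
    case False
    obtain e where e: "A x p = sV e (A x y)" using V.not_ind2_line[OF False V.ind2_nz[OF ab]] by blast
    have "e \<noteq> 0" using that e by auto
    then have "ind2 sV (A x p) (A x z)" using V.ind2_scale_left[OF ab] e by simp
    moreover have "A x (k + z) = A x z" using that by (simp add: A_add2)
    ultimately have "A p (k + z) \<in> range (A x)" using L1R by metis
    then show ?thesis using shift[of p 0 k z] by simp
  qed
  have caseNI: "A p q \<in> range (A x)" if np: "A x p \<noteq> 0" "\<not> ind2 sV (A x p) (A x q)" for p q
  proof -
    have "\<not> ind2 sV (A x q) (A x p)" using np V.ind2_sym by blast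
    then obtain c where c: "A x q = sV c (A x p)" using V.not_ind2_line[OF _ np(1)] by blast
    define k where "k = q - sU c p"
    have "A x k = 0" by (simp add: k_def A_diff2 A_scale2 c)
    then have "A p k \<in> range (A x)" using caseP np(1) by blast
    moreover have "A p q = A p k" by (simp add: k_def A_diff2 A_scale2 alt)
    ultimately show ?thesis by simp
  qed
  show ?thesis
  proof (cases "ind2 sV (A x p) (A x q)")
    case True then show ?thesis by (rule L1R)
  next
    case False
    show ?thesis
    proof (cases "A x p \<noteq> 0")
      case True then show ?thesis using caseNI False by blast
    next
      case F1: False
      show ?thesis
      proof (cases "A x q \<noteq> 0")
        case True
        have "\<not> ind2 sV (A x q) (A x p)" using False V.ind2_sym by blast
        then have "A q p \<in> range (A x)" using caseNI True by blast
        then show ?thesis using A_antisym[of p q] R_neg by metis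
      next
        case False
        have "A x (p + y) = A x y" "A x (q + z) = A x z" using F1 False by (simp_all add: A_add2)
        then have "A (p + y) (q + z) \<in> range (A x)" using L1R ab by metis
        then show ?thesis using shift by blast
      qed
    qed
  qed
qed

lemma M2:
  assumes spans: "V.span {A x y | x y. True} = UNIV"
    and notline: "\<And>a. \<not> (\<forall>v. \<exists>k. v = sV k a)"
  obtains x where "\<And>v. \<exists>w. A x w = v" "\<exists>y z. ind2 sV (A x y) (A x z)"
proof -
  obtain x y z where ab: "ind2 sV (A x y) (A x z)" using M2_aux_line[OF assms] by blast
  have "V.span {A x y | x y. True} \<subseteq> range (A x)"
    using M2_main[OF ab] by (intro V.span_minimal[OF _ R_sub]) auto
  then have "\<And>v. \<exists>w. A x w = v" using spans by (metis UNIV_I image_iff subsetD)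
  then show ?thesis using that ab by blast
qed

lemma F2_step1:
  assumes ind: "ind2 sV (A x z) (A x w)" and k: "A x k = 0"
  shows "\<exists>s t. A z k = sV s (A x z) + sV t (A x w)"
proof -
  have "A x (w + k) = A x w" using k by (simp add: A_add2)
  then obtain s t where st: "A z (w + k) = sV s (A x z) + sV t (A x w)" using L1[of x z "w + k"] ind by auto
  obtain s' t' where st': "A z w = sV s' (A x z) + sV t' (A x w)" using L1[OF ind] by blast
  have "A z k = A z (w + k) - A z w" by (simp add: A_add2)
  also have "\<dots> = sV (s - s') (A x z) + sV (t - t') (A x w)"
    unfolding st st' by (simp add: V.scale_left_diff_distrib algebra_simps)
  finally show ?thesis by blast
qed

lemma F2_step2:
  assumes surj: "\<And>v. \<exists>w. A x w = v"
    and three: "\<And>a. a \<noteq> 0 \<Longrightarrow> \<exists>b c. ind3 sV a b c"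
    and k: "A x k = 0" and nz: "A x z \<noteq> 0"
  shows "\<exists>e. A k z = sV e (A x z)"
proof -
  obtain b c where bc: "ind3 sV (A x z) b c" using three nz by blast
  obtain w where w: "A x w = b" using surj by blast
  obtain w' where w': "A x w' = c" using surj by blast
  have i1: "ind2 sV (A x z) (A x w)" using V.ind3_ind2[OF bc] w by simp
  have i2: "ind2 sV (A x z) (A x w')" using V.ind3_ind2[OF V.ind3_perm[OF bc]] w' by simp
  obtain s1 t1 where e1: "A z k = sV s1 (A x z) + sV t1 b" using F2_step1[OF i1 k] w by blast
  obtain s2 t2 where e2: "A z k = sV s2 (A x z) + sV t2 c" using F2_step1[OF i2 k] w' by blast
  have "sV (s1 - s2) (A x z) + sV t1 b + sV (- t2) c = 0"
    using e1 e2 by (simp add: V.scale_left_diff_distrib algebra_simps)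
  then have "t1 = 0" using bc unfolding ind3_def by blast
  then have "A z k = sV s1 (A x z)" using e1 by simp
  then have "A k z = sV (- s1) (A x z)" using A_antisym[of k z] by simp
  then show ?thesis by blast
qed

lemma F2:
  assumes surj: "\<And>v. \<exists>w. A x w = v"
    and three: "\<And>a. a \<noteq> 0 \<Longrightarrow> \<exists>b c. ind3 sV a b c"
    and ind: "ind2 sV (A x z0) (A x z1)"
    and k: "A x k = 0"
  shows "\<exists>c. \<forall>z. A k z = sV c (A x z)"
  using prop_lemma[OF ind] F2_step2[OF surj three k] by blast

end



lemma extend_enum:
  assumes fin: "finite S" and cS: "card S = n" and inj: "inj_on g {1..k}"
    and gS: "g ` {1..k} \<subseteq> S" and kn: "k \<le> n"
  shows "\<exists>u. (\<forall>i\<in>{1..k}. u i = g i) \<and> bij_betw u {1..n} S"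
proof -
  let ?S' = "S - g ` {1..k}"
  have "card ?S' = n - k"
    using card_Diff_subset[OF finite_imageI gS] card_image[OF inj] cS by simp
  then have "card {k+1..n} = card ?S'" by simp
  then obtain f where f: "bij_betw f {k+1..n} ?S'"
    using finite_same_card_bij[of "{k+1..n}" ?S'] fin by auto
  define u where "u i = (if i \<le> k then g i else f i)" for i
  have b1: "bij_betw u {1..k} (g ` {1..k})"
    using inj_on_imp_bij_betw[OF inj] by (subst bij_betw_cong[of _ u g]) (auto simp: u_def)
  have b2: "bij_betw u {k+1..n} ?S'"
    using f by (subst bij_betw_cong[of _ u f]) (auto simp: u_def)
  have "bij_betw u ({1..k} \<union> {k+1..n}) (g ` {1..k} \<union> ?S')"
    by (rule bij_betw_combine[OF b1 b2]) auto
  moreover have "{1..k} \<union> {k+1..n} = {1..n}" using kn by auto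
  moreover have "g ` {1..k} \<union> ?S' = S" using gS by auto
  ultimately have "bij_betw u {1..n} S" by simp
  moreover have "\<forall>i\<in>{1..k}. u i = g i" by (simp add: u_def)
  ultimately show ?thesis by blast
qed

context vector_space begin

lemma indep_ind2:
  assumes "independent S" "a \<in> S" "b \<in> S" "a \<noteq> b"
  shows "ind2 scale a b"
  unfolding ind2_def
proof (intro allI impI)
  fix c d assume eq: "c *s a + d *s b = 0"
  define f where "f v = (if v = a then c else d)" for v
  have "(\<Sum>v\<in>{a, b}. f v *s v) = 0" using eq assms(4) by (simp add: f_def)
  moreover have "{a, b} \<subseteq> S" using assms by blast
  ultimately have "f a = 0" "f b = 0" using independentD[OF assms(1), of "{a,b}" f] by blast+
  then show "c = 0 \<and> d = 0" using assms(4) by (simp add: f_def)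
qed

lemma indep_ind3:
  assumes "independent S" "a \<in> S" "b \<in> S" "w \<in> S" "a \<noteq> b" "a \<noteq> w" "b \<noteq> w"
  shows "ind3 scale a b w"
  unfolding ind3_def
proof (intro allI impI)
  fix c d e assume eq: "c *s a + d *s b + e *s w = 0"
  define f where "f v = (if v = a then c else if v = b then d else e)" for v
  have "(\<Sum>v\<in>{a, b, w}. f v *s v) = 0" using eq assms(5-7) by (simp add: f_def add.assoc)
  moreover have "{a, b, w} \<subseteq> S" using assms by blast
  ultimately have "f a = 0" "f b = 0" "f w = 0" using independentD[OF assms(1), of "{a,b,w}" f] by blast+
  then show "c = 0 \<and> d = 0 \<and> e = 0" using assms(5-7) unfolding f_def by metis
qed

end

context AS begin

lemma A_sum2: "A x (sum g I) = (\<Sum>i\<in>I. A x (g i))"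
  by (induction I rule: infinite_finite_induct) (simp_all add: A_add2)

lemma A_mh: "module_hom sU sV (A x)"
  using lin1[of x] by (simp add: module_hom_iff_linear)

lemma indep_union:
  assumes T: "U.independent T" "finite T" "\<And>t. t \<in> T \<Longrightarrow> A x t = 0"
    and W: "V.independent (A x ` W)" "inj_on (A x) W" "finite W"
  shows "U.independent (W \<union> T)"
proof -
  have disj: "W \<inter> T = {}"
  proof (rule ccontr)
    assume "W \<inter> T \<noteq> {}"
    then obtain t where "t \<in> W" "t \<in> T" by blast
    then have "0 \<in> A x ` W" using T(3) by force
    then show False using W(1) V.dependent_zero by blast
  qed
  have fin: "finite (W \<union> T)" using T W by simp
  show ?thesis
  proof
    assume "U.dependent (W \<union> T)"
    then obtain c where c: "\<exists>v\<in>W \<union> T. c v \<noteq> 0" "(\<Sum>v\<in>W \<union> T. sU (c v) v) = 0"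
      using U.dependent_finite[OF fin] by blast
    have split: "(\<Sum>v\<in>W. sU (c v) v) + (\<Sum>v\<in>T. sU (c v) v) = 0"
      using c(2) sum.union_disjoint[OF W(3) T(2) disj, of "\<lambda>v. sU (c v) v"] by simp
    have "A x (\<Sum>v\<in>W. sU (c v) v) + A x (\<Sum>v\<in>T. sU (c v) v) = 0"
      using split A_add2 by (metis A_zero2)
    moreover have "A x (\<Sum>v\<in>T. sU (c v) v) = 0"
      using T(3) by (simp add: A_sum2 A_scale2)
    ultimately have "(\<Sum>v\<in>W. sV (c v) (A x v)) = 0" by (simp add: A_sum2 A_scale2)
    moreover define c' where "c' = c \<circ> the_inv_into W (A x)"
    ultimately have "(\<Sum>y\<in>A x ` W. sV (c' y) y) = 0"
      using W(2) by (simp add: sum.reindex c'_def the_inv_into_f_f)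
    then have cW: "\<forall>y\<in>A x ` W. c' y = 0"
      using V.independentD[OF W(1) finite_imageI[OF W(3)] subset_refl] by blast
    have cW': "\<forall>v\<in>W. c v = 0"
    proof
      fix v assume "v \<in> W"
      then show "c v = 0" using cW W(2) by (auto simp: c'_def the_inv_into_f_f)
    qed
    then have "(\<Sum>v\<in>T. sU (c v) v) = 0" using split by simp
    then have "\<forall>v\<in>T. c v = 0" using U.independentD[OF T(1) T(2) subset_refl] by blast
    then show False using cW' c(1) by blast
  qed
qed

end



lemma fd_exists:
  assumes vs: "vector_space s" and fin: "\<exists>S. finite S \<and> module.span s S = UNIV"
  shows "\<exists>B. finite_dimensional_vector_space s B"
proof -
  interpret vector_space s by (rule vs)
  obtain S where S: "finite S" "span S = UNIV" using fin by blast
  obtain B where B: "B \<subseteq> S" "independent B" "S \<subseteq> span B" using maximal_independent_subset by blast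
  have "span B = UNIV" using S B by (metis span_minimal subspace_span top.extremum_uniqueI)
  moreover have "finite B" using B S finite_subset by blast
  ultimately have "finite_dimensional_vector_space s B"
    using B by unfold_locales auto
  then show ?thesis by blast
qed

context
  fixes sU :: "'f::field \<Rightarrow> 'u::ab_group_add \<Rightarrow> 'u"
    and sV :: "'f \<Rightarrow> 'v::ab_group_add \<Rightarrow> 'v"
    and A :: "'u \<Rightarrow> 'u \<Rightarrow> 'v"
    and n m :: nat
  assumes vsU: "vector_space sU" and vsV: "vector_space sV"
    and finU: "\<exists>S. finite S \<and> module.span sU S = UNIV"
    and finV: "\<exists>S. finite S \<and> module.span sV S = UNIV"
    and dimU: "vector_space.dim sU (UNIV :: 'u set) = n"
    and dimV: "vector_space.dim sV (UNIV :: 'v set) = m"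
    and lin1: "\<forall>x. Vector_Spaces.linear sU sV (\<lambda>y. A x y)"
    and lin2: "\<forall>y. Vector_Spaces.linear sU sV (\<lambda>x. A x y)"
    and alt: "\<forall>x. A x x = 0"
    and spans: "module.span sV {A x y | x y. True} = UNIV"
    and m_gt: "m > 2" and n_gt: "n > m + 1"
begin

interpretation U: vector_space sU by (rule vsU)
interpretation V: vector_space sV by (rule vsV)
interpretation AS sU sV A
  using vsU vsV lin1 lin2 alt by (simp add: AS_def AS_axioms_def)

lemmas gDd = gD_def[OF vsV]
lemmas gGd = gG_def[OF vsV]
lemmas gvd = gval_def[OF vsV]

lemma case_tri:
  assumes tri: "ind3 sV (A x y) (A x z) (A y z)"
  shows "\<exists>u :: nat \<Rightarrow> 'u.
           inj_on u {1..n} \<and>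
           \<not> module.dependent sU (u ` {1..n}) \<and>
           module.span sU (u ` {1..n}) = UNIV \<and>
           \<not> tree_height_one n (greedy_B sV A u n)"
proof -
  obtain BU where "finite_dimensional_vector_space sU BU" using fd_exists[OF vsU finU] by blast
  then interpret UF: finite_dimensional_vector_space sU BU .
  have i2: "ind2 sV (A x y) (A x z)" using V.ind3_ind2[OF tri] .
  have nxy: "A x y \<noteq> 0" using V.ind2_nz[OF i2] .
  have nxz: "A x z \<noteq> 0" using V.ind2_nz[OF V.ind2_sym[OF i2]] .
  have nyz: "A y z \<noteq> 0"
    using V.ind2_nz[OF V.ind3_ind2[OF V.ind3_perm2[OF V.ind3_perm[OF V.ind3_perm2[OF tri]]]]] .
  have xy: "x \<noteq> y" using nxy alt by auto
  have xz: "x \<noteq> z" using nxz alt by auto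
  have yz: "y \<noteq> z" using nyz alt by auto
  have x0: "x \<noteq> 0" using nxy by auto
  have indxyz: "U.independent {x, y, z}"
  proof
    assume "U.dependent {x, y, z}"
    then obtain c where c: "\<exists>v\<in>{x, y, z}. c v \<noteq> 0" "(\<Sum>v\<in>{x, y, z}. sU (c v) v) = 0"
      using U.dependent_finite[of "{x,y,z}"] by auto
    have eq: "sU (c x) x + sU (c y) y + sU (c z) z = 0" using c(2) xy xz yz by (simp add: add.assoc)
    have "A x (sU (c x) x + sU (c y) y + sU (c z) z) = 0" using eq by simp
    then have "sV 0 (A x y) + sV (c y) (A x y) + sV (c z) (A x z) = 0"
      by (simp add: A_add2 A_scale2 alt)
    then have "sV (c y) (A x y) + sV (c z) (A x z) + sV 0 (A y z) = 0" by simp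
    then have cyz: "c y = 0" "c z = 0" using tri unfolding ind3_def by blast+
    then have "sU (c x) x = 0" using eq by simp
    then have "c x = 0" using x0 by simp
    then show False using c(1) cyz by auto
  qed
  obtain B where B: "{x, y, z} \<subseteq> B" "U.independent B" "UNIV \<subseteq> U.span B"
    by (rule U.maximal_independent_subset_extend[OF subset_UNIV indxyz])
  have cB: "card B = n" using U.basis_card_eq_dim[of B UNIV] B dimU by simp
  have fB: "finite B" using UF.finiteI_independent[OF B(2)] .
  define g where "g i = (if i = 1 then x else if i = 2 then y else z)" for i :: nat
  have ginj: "inj_on g {1..3}" using xy xz yz by (auto simp: g_def inj_on_def)
  have gB: "g ` {1..3} \<subseteq> B" using B(1) by (auto simp: g_def)
  obtain u where u: "\<forall>i\<in>{1..3}. u i = g i" "bij_betw u {1..n} B"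
    using extend_enum[OF fB cB ginj gB] n_gt m_gt by auto
  have u123: "u 1 = x" "u 2 = y" "u 3 = z" "u (Suc 0) = x" using u(1) by (auto simp: g_def)
  have img: "u ` {1..n} = B" using u(2) by (simp add: bij_betw_def)
  have notree: "\<not> tree_height_one n (greedy_B sV A u n)"
  proof
    assume th: "tree_height_one n (greedy_B sV A u n)"
    have G: "greedy_B sV A u n = gG sV A u n" by (rule greedy_B_char[OF vsV])
    have Y: "(1, 2) \<in> Ypairs n" "(1, 3) \<in> Ypairs n" "(2, 3) \<in> Ypairs n"
      using n_gt m_gt by (auto simp: Ypairs_def)
    have D12: "gD n (1, 2) = {}" "gD n (Suc 0, 2) = {}" by (auto simp: gDd Ypairs_def ylt_def)
    have D13: "gD n (1, 3) = {(1, 2)}" "gD n (Suc 0, 3) = {(1, 2)}" using n_gt m_gt by (auto simp: gDd Ypairs_def ylt_def)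
    have D23: "gD n (2, 3) = {(1, 2), (1, 3)}" using n_gt m_gt by (auto simp: gDd Ypairs_def ylt_def)
    have "(1, 2) \<in> gG sV A u n"
      using Y nxy by (simp add: gGd D12 gvd u123)
    moreover have "(1, 3) \<in> gG sV A u n"
    proof -
      have "A x z \<notin> V.span {A x y}"
      proof
        assume "A x z \<in> V.span {A x y}"
        then obtain k where k: "A x z = sV k (A x y)" by (auto simp: V.span_singleton)
        have "sV k (A x y) + sV (- 1) (A x z) + sV 0 (A y z) = 0" using k by simp
        then have "(- 1 :: 'f) = 0" using tri unfolding ind3_def by blast
        then show False by simp
      qed
      then show ?thesis using Y by (simp add: gGd D13 gvd u123)
    qed
    moreover have "(2, 3) \<in> gG sV A u n"
    proof -
      have "A y z \<notin> V.span {A x y, A x z}"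
      proof
        assume "A y z \<in> V.span {A x y, A x z}"
        then obtain k where "A y z - sV k (A x y) \<in> V.span {A x z}" using V.span_breakdown_eq by blast
        then obtain k' where k': "A y z - sV k (A x y) = sV k' (A x z)" by (auto simp: V.span_singleton)
        have "sV k (A x y) + sV k' (A x z) + sV (- 1) (A y z) = 0"
          using k' by (simp add: algebra_simps)
        then have "(- 1 :: 'f) = 0" using tri unfolding ind3_def by blast
        then show False by simp
      qed
      then show ?thesis using Y by (simp add: gGd D23 gvd u123)
    qed
    ultimately have m3: "(1, 2) \<in> gG sV A u n" "(1, 3) \<in> gG sV A u n" "(2, 3) \<in> gG sV A u n" by blast+
    obtain i where "\<forall>p\<in>gG sV A u n. i = fst p \<or> i = snd p" using th unfolding tree_height_one_def G by blast
    then have "i = 1 \<or> i = 2" "i = 1 \<or> i = 3" "i = 2 \<or> i = 3" using m3 by force+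
    then show False by auto
  qed
  show ?thesis
    using u(2) B img notree by (intro exI[of _ u]) (auto simp: bij_betw_def)
qed


lemma case_star:
  assumes NT0: "\<forall>x y z. \<not> ind3 sV (A x y) (A x z) (A y z)"
  shows "\<exists>u :: nat \<Rightarrow> 'u.
           inj_on u {1..n} \<and>
           \<not> module.dependent sU (u ` {1..n}) \<and>
           module.span sU (u ` {1..n}) = UNIV \<and>
            (greedy_B sV A u n = {(1, k) | k. 2 \<le> k \<and> k \<le> m + 1} \<and>
             (\<forall>i. m + 2 \<le> i \<and> i \<le> n \<longrightarrow> A (u 1) (u i) = 0) \<and>
             (\<forall>i j. m + 1 < i \<and> i < j \<and> j \<le> n \<longrightarrow> A (u i) (u j) = 0) \<and>
             (\<forall>i j. 2 \<le> i \<and> i \<le> m + 1 \<and> m + 1 < j \<and> j \<le> n \<longrightarrow>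
                A (u i) (u j) \<in> module.span sV {A (u 1) (u i)}))"
proof -
  obtain BU where "finite_dimensional_vector_space sU BU" using fd_exists[OF vsU finU] by blast
  then interpret UF: finite_dimensional_vector_space sU BU .
  obtain BV where "finite_dimensional_vector_space sV BV" using fd_exists[OF vsV finV] by blast
  then interpret VF: finite_dimensional_vector_space sV BV .
  interpret ASNT sU sV A
    using vsU vsV lin1 lin2 alt NT0 by (simp add: ASNT_def ASNT_axioms_def AS_def AS_axioms_def)
  have notline: "\<not> (\<forall>v. \<exists>k. v = sV k a)" for a
  proof
    assume "\<forall>v. \<exists>k. v = sV k a"
    then have "UNIV \<subseteq> V.span {a}" by (auto simp: V.span_singleton)
    then have "V.dim (UNIV :: 'v set) \<le> card {a}" using V.dim_le_card by blast
    then show False using dimV m_gt by simp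
  qed
  have three: "\<exists>b c. ind3 sV a b c" if a0: "a \<noteq> 0" for a
  proof -
    have "V.independent {a}" using a0 by simp
    then obtain B' where B': "{a} \<subseteq> B'" "V.independent B'" "UNIV \<subseteq> V.span B'"
      by (rule V.maximal_independent_subset_extend[OF subset_UNIV])
    have cB': "card B' = m" using V.basis_card_eq_dim[of B' UNIV] B' dimV by simp
    have fB': "finite B'" using VF.finiteI_independent[OF B'(2)] .
    have "card (B' - {a}) = m - 1" using cB' B'(1) fB' by simp
    then have c1: "card (B' - {a}) \<ge> 2" using m_gt by simp
    have "B' - {a} \<noteq> {}"
    proof
      assume "B' - {a} = {}"
      with c1 show False by simp
    qed
    then obtain b where b: "b \<in> B' - {a}" by blast
    have "card (B' - {a} - {b}) = m - 2" using \<open>card (B' - {a}) = m - 1\<close> b fB' by simp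
    then have c2: "card (B' - {a} - {b}) \<ge> 1" using m_gt by simp
    have "B' - {a} - {b} \<noteq> {}"
    proof
      assume "B' - {a} - {b} = {}"
      with c2 show False by simp
    qed
    then obtain c where c: "c \<in> B' - {a} - {b}" by blast
    have "ind3 sV a b c" using V.indep_ind3[OF B'(2)] B'(1) b c by auto
    then show ?thesis by blast
  qed
  obtain x where surj: "\<And>v. \<exists>w. A x w = v" and "\<exists>y z. ind2 sV (A x y) (A x z)"
    using M2[OF spans notline] by blast
  then obtain y0 z0 where i0: "ind2 sV (A x y0) (A x z0)" by blast
  obtain BV0 where BV0: "BV0 \<subseteq> UNIV" "V.independent BV0" "UNIV \<subseteq> V.span BV0" "card BV0 = V.dim (UNIV :: 'v set)"
    by (rule V.basis_exists)
  have fBV0: "finite BV0" using VF.finiteI_independent[OF BV0(2)] .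
  have "card {1..m} = card BV0" using BV0(4) dimV by simp
  then obtain v where vb: "bij_betw v {1..m} BV0"
    using finite_same_card_bij[OF _ fBV0] by blast
  have vinj: "inj_on v {1..m}" and vimg: "v ` {1..m} = BV0" using vb by (auto simp: bij_betw_def)
  have vnz: "v i \<noteq> 0" if "i \<in> {1..m}" for i
  proof
    assume "v i = 0"
    then have "0 \<in> BV0" using vimg that by (metis image_eqI)
    then show False using BV0(2) V.dependent_zero by metis
  qed
  define w where "w i = (SOME t. A x t = v i)" for i
  have hw: "A x (w i) = v i" for i unfolding w_def using someI_ex[OF surj[of "v i"]] .
  define rad where "rad = {r. \<forall>z. A r z = 0}"
  have subrad: "U.subspace rad"
    by (rule U.subspaceI) (auto simp: rad_def A_add1 A_scale1)
  obtain b0 where b0: "b0 \<subseteq> rad" "U.independent b0" "rad \<subseteq> U.span b0"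
    by (rule U.basis_exists)
  have fb0: "finite b0" using UF.finiteI_independent[OF b0(2)] .
  have xnr: "x \<notin> rad" using V.ind2_nz[OF i0] by (auto simp: rad_def)
  have spb0: "U.span b0 \<subseteq> rad" using U.span_minimal[OF b0(1) subrad] .
  define T where "T = insert x b0"
  have indT: "U.independent T" unfolding T_def
    using U.independent_insertI[OF _ b0(2)] xnr spb0 by blast
  have fT: "finite T" using fb0 by (simp add: T_def)
  have kerT: "A x t = 0" if "t \<in> T" for t
  proof (cases "t = x")
    case True then show ?thesis using alt by simp
  next
    case False
    then have "t \<in> rad" using that b0(1) by (auto simp: T_def)
    then show ?thesis using A_antisym[of x t] by (simp add: rad_def)
  qed
  define W where "W = w ` {1..m}"
  have AW: "A x ` W = BV0" using vimg by (simp add: W_def image_image hw)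
  have winj: "inj_on w {1..m}"
  proof (rule inj_onI)
    fix i j assume "i \<in> {1..m}" "j \<in> {1..m}" "w i = w j"
    then have "v i = v j" using hw by metis
    then show "i = j" using vinj \<open>i \<in> {1..m}\<close> \<open>j \<in> {1..m}\<close> by (auto dest: inj_onD)
  qed
  have AWinj: "inj_on (A x) W"
  proof (rule inj_onI)
    fix a b assume "a \<in> W" "b \<in> W" "A x a = A x b"
    then obtain i j where "i \<in> {1..m}" "j \<in> {1..m}" "a = w i" "b = w j" by (auto simp: W_def)
    then show "a = b" using \<open>A x a = A x b\<close> hw vinj by (auto dest: inj_onD)
  qed
  define S where "S = W \<union> T"
  have indS: "U.independent S" unfolding S_def
    using indep_union[OF indT fT kerT _ AWinj] AW BV0(2) by (simp add: W_def)
  have spanS: "UNIV \<subseteq> U.span S"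
  proof
    fix yy :: 'u
    have "A x yy \<in> V.span (A x ` W)" using AW BV0(3) by auto
    also have "V.span (A x ` W) = A x ` U.span W" by (rule module_hom.span_image[OF A_mh])
    finally obtain y' where y': "y' \<in> U.span W" "A x y' = A x yy" by auto
    define k where "k = yy - y'"
    have k0: "A x k = 0" using y' by (simp add: k_def A_diff2)
    obtain c where c: "\<forall>z. A k z = sV c (A x z)" using F2[OF surj three i0 k0] by blast
    define r where "r = k - sU c x"
    have "r \<in> rad" using c by (simp add: rad_def r_def A_diff1 A_scale1)
    then have r1: "r \<in> U.span S" using b0(3) U.span_mono[of b0 S] by (auto simp: S_def T_def)
    have y1: "y' \<in> U.span S" using y'(1) U.span_mono[of W S] by (auto simp: S_def)
    have x1: "sU c x \<in> U.span S" by (intro U.span_scale U.span_base) (simp add: S_def T_def)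
    have "yy = y' + sU c x + r" by (simp add: r_def k_def)
    then show "yy \<in> U.span S" using r1 y1 x1 U.span_add by metis
  qed
  have cS: "card S = n" using U.basis_card_eq_dim[of S UNIV] indS spanS dimU by simp
  have fS: "finite S" using UF.finiteI_independent[OF indS] .
  have xW: "x \<notin> W"
  proof
    assume "x \<in> W"
    then obtain i where "i \<in> {1..m}" "x = w i" by (auto simp: W_def)
    then show False using hw[of i] alt vnz by force
  qed
  define g where "g i = (if i = 1 then x else w (i - 1))" for i
  have ginj: "inj_on g {1..m+1}"
  proof (rule inj_onI)
    fix i j assume ij: "i \<in> {1..m+1}" "j \<in> {1..m+1}" "g i = g j"
    show "i = j"
    proof (cases "i = 1"; cases "j = 1")
      assume "i \<noteq> 1" "j \<noteq> 1"
      then have "w (i - 1) = w (j - 1)" "i - 1 \<in> {1..m}" "j - 1 \<in> {1..m}" using ij by (auto simp: g_def)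
      then show "i = j" using winj ij \<open>i \<noteq> 1\<close> \<open>j \<noteq> 1\<close> by (auto dest: inj_onD)
    next
      assume "i = 1" "j \<noteq> 1"
      then have "x = w (j - 1)" "j - 1 \<in> {1..m}" using ij by (auto simp: g_def)
      then have "x \<in> W" unfolding W_def by blast
      then show "i = j" using xW by blast
    next
      assume "i \<noteq> 1" "j = 1"
      then have "x = w (i - 1)" "i - 1 \<in> {1..m}" using ij by (auto simp: g_def)
      then have "x \<in> W" unfolding W_def by blast
      then show "i = j" using xW by blast
    qed simp
  qed
  have gS: "g ` {1..m+1} \<subseteq> S"
  proof
    fix e assume "e \<in> g ` {1..m+1}"
    then obtain i where i: "i \<in> {1..m+1}" "e = g i" by blast
    show "e \<in> S"
    proof (cases "i = 1")
      case True then show ?thesis using i by (simp add: g_def S_def T_def)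
    next
      case False
      then have "i - 1 \<in> {1..m}" using i by auto
      then have "w (i - 1) \<in> W" unfolding W_def by blast
      then show ?thesis using i False by (simp add: g_def S_def)
    qed
  qed
  obtain u where u: "\<forall>i\<in>{1..m+1}. u i = g i" "bij_betw u {1..n} S"
    using extend_enum[OF fS cS ginj gS] n_gt by auto
  have uinj: "inj_on u {1..n}" and uimg: "u ` {1..n} = S" using u(2) by (auto simp: bij_betw_def)
  have u1: "u 1 = x" "u (Suc 0) = x" using u(1) by (auto simp: g_def)
  have uw: "u i = w (i - 1)" if "2 \<le> i" "i \<le> m + 1" for i using u(1) that by (auto simp: g_def)
  have urad: "u i \<in> rad" if i: "m + 2 \<le> i" "i \<le> n" for i
  proof -
    have uS: "u i \<in> S" using uimg i by auto
    have "u i \<noteq> x"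
    proof
      assume "u i = x"
      then have "u i = u 1" using u1 by simp
      then show False using inj_onD[OF uinj] i by force
    qed
    moreover have "u i \<notin> W"
    proof
      assume "u i \<in> W"
      then obtain j where j: "j \<in> {1..m}" "u i = w j" by (auto simp: W_def)
      then have "u i = u (j + 1)" using uw[of "j+1"] by simp
      then show False using inj_onD[OF uinj _ _] i j by force
    qed
    ultimately have "u i \<in> b0" using uS by (auto simp: S_def T_def)
    then show ?thesis using b0(1) by auto
  qed
  have val1: "gval A u (1, j) = v (j - 1)" if "2 \<le> j" "j \<le> m + 1" for j
    using that by (simp add: gvd u1 uw hw)
  have vind: "ind2 sV (v a) (v b)" if "a \<in> {1..m}" "b \<in> {1..m}" "a \<noteq> b" for a b
  proof -
    have "v a \<in> BV0" "v b \<in> BV0" using vimg that by (metis image_eqI)+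
    moreover have "v a \<noteq> v b" using inj_onD[OF vinj] that by blast
    ultimately show ?thesis using V.indep_ind2[OF BV0(2)] by blast
  qed
  have val2: "\<exists>s t. gval A u (i, j) = sV s (v (i - 1)) + sV t (v (j - 1))"
    if "2 \<le> i" "i < j" "j \<le> m + 1" for i j
  proof -
    have "ind2 sV (v (i - 1)) (v (j - 1))" by (intro vind) (use that in auto)
    then have "ind2 sV (A x (w (i - 1))) (A x (w (j - 1)))" by (simp add: hw)
    from L1[OF this] show ?thesis using that by (simp add: gvd uw hw)
  qed
  have G: "greedy_B sV A u n = gG sV A u n" by (rule greedy_B_char[OF vsV])
  have Star: "gG sV A u n = {(1, k) | k. 2 \<le> k \<and> k \<le> m + 1}"
  proof
    show "gG sV A u n \<subseteq> {(1, k) | k. 2 \<le> k \<and> k \<le> m + 1}"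
    proof
      fix p assume pG: "p \<in> gG sV A u n"
      obtain i j where p: "p = (i, j)" by force
      have Y: "1 \<le> i" "i < j" "j \<le> n" and nsp: "gval A u (i, j) \<notin> V.span (gval A u ` gD n (i, j))"
        using pG by (auto simp: gGd p Ypairs_def)
      have jm: "j \<le> m + 1"
      proof (rule ccontr)
        assume "\<not> j \<le> m + 1"
        have "BV0 \<subseteq> gval A u ` gD n (i, j)"
        proof
          fix b assume "b \<in> BV0"
          then obtain l where l: "l \<in> {1..m}" "b = v l" using vimg by auto
          then have "b = gval A u (1, l + 1)" using val1[of "l + 1"] by simp
          moreover have "(1, l + 1) \<in> gD n (i, j)"
            using l \<open>\<not> j \<le> m + 1\<close> Y by (auto simp: gDd Ypairs_def ylt_def)
          ultimately show "b \<in> gval A u ` gD n (i, j)" by blast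
        qed
        then have "UNIV \<subseteq> V.span (gval A u ` gD n (i, j))" using BV0(3) V.span_mono by blast
        then show False using nsp by blast
      qed
      have i1: "i = 1"
      proof (rule ccontr)
        assume "i \<noteq> 1"
        then have i2: "2 \<le> i" using Y by simp
        obtain s t where st: "gval A u (i, j) = sV s (v (i - 1)) + sV t (v (j - 1))"
          using val2[OF i2 Y(2) jm] by blast
        have "(1, i) \<in> gD n (i, j)" "(1, j) \<in> gD n (i, j)"
          using Y i2 by (auto simp: gDd Ypairs_def ylt_def)
        then have "v (i - 1) \<in> gval A u ` gD n (i, j)" "v (j - 1) \<in> gval A u ` gD n (i, j)"
          using val1[of i] val1[of j] i2 Y jm by (metis image_eqI le_trans less_imp_le_nat)+
        then have "gval A u (i, j) \<in> V.span (gval A u ` gD n (i, j))"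
          unfolding st by (intro V.span_add V.span_scale V.span_base)
        then show False using nsp by blast
      qed
      show "p \<in> {(1, k) | k. 2 \<le> k \<and> k \<le> m + 1}" using p i1 Y jm by auto
    qed
  next
    show "{(1, k) | k. 2 \<le> k \<and> k \<le> m + 1} \<subseteq> gG sV A u n"
    proof
      fix p :: "nat \<times> nat" assume "p \<in> {(1, k) | k. 2 \<le> k \<and> k \<le> m + 1}"
      then obtain j where p: "p = (1, j)" and j: "2 \<le> j" "j \<le> m + 1" by blast
      define Sj where "Sj = v ` ({1..m} - {j - 1})"
      have sub: "gval A u ` gD n (1, j) \<subseteq> V.span Sj"
      proof
        fix e assume "e \<in> gval A u ` gD n (1, j)"
        then obtain a b where ab: "(a, b) \<in> gD n (1, j)" "e = gval A u (a, b)" by auto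
        then have abY: "1 \<le> a" "a < b" "b < j" by (auto simp: gDd Ypairs_def ylt_def)
        show "e \<in> V.span Sj"
        proof (cases "a = 1")
          case True
          then have "e = v (b - 1)" using ab abY val1[of b] j by simp
          moreover have "b - 1 \<in> {1..m} - {j - 1}" using abY j by auto
          ultimately show ?thesis by (auto simp: Sj_def intro: V.span_base)
        next
          case False
          then obtain s t where st: "e = sV s (v (a - 1)) + sV t (v (b - 1))"
            using val2[of a b] abY j ab by auto
          have "a - 1 \<in> {1..m} - {j - 1}" "b - 1 \<in> {1..m} - {j - 1}" using abY j False by auto
          then have "v (a - 1) \<in> Sj" "v (b - 1) \<in> Sj" by (auto simp: Sj_def)
          then show ?thesis unfolding st by (intro V.span_add V.span_scale V.span_base)
        qed
      qed
      have jm1: "j - 1 \<in> {1..m}" using j by auto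
      have "Sj = v ` {1..m} - v ` {j - 1}" unfolding Sj_def
        by (rule inj_on_image_set_diff[OF vinj]) (use jm1 in auto)
      then have "Sj = BV0 - {v (j - 1)}" using vimg by simp
      moreover have "v (j - 1) \<in> BV0" using vimg jm1 by (metis image_eqI)
      ultimately have "v (j - 1) \<notin> V.span Sj" using BV0(2) unfolding V.dependent_def by blast
      moreover have "V.span (gval A u ` gD n (1, j)) \<subseteq> V.span Sj"
        using V.span_minimal[OF sub V.subspace_span] .
      ultimately have "gval A u (1, j) \<notin> V.span (gval A u ` gD n (1, j))" using val1[OF j] by auto
      moreover have "(1, j) \<in> Ypairs n" using j n_gt by (auto simp: Ypairs_def)
      ultimately show "p \<in> gG sV A u n" by (simp add: gGd p)
    qed
  qed
  have c2: "\<forall>i. m + 2 \<le> i \<and> i \<le> n \<longrightarrow> A (u 1) (u i) = 0"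
  proof (intro allI impI)
    fix i assume "m + 2 \<le> i \<and> i \<le> n"
    then have "A (u i) (u 1) = 0" using urad[of i] by (auto simp: rad_def)
    then show "A (u 1) (u i) = 0" using A_antisym[of "u 1" "u i"] by simp
  qed
  have c3: "\<forall>i j. m + 1 < i \<and> i < j \<and> j \<le> n \<longrightarrow> A (u i) (u j) = 0"
    using urad by (auto simp: rad_def)
  have c4: "\<forall>i j. 2 \<le> i \<and> i \<le> m + 1 \<and> m + 1 < j \<and> j \<le> n \<longrightarrow>
                A (u i) (u j) \<in> module.span sV {A (u 1) (u i)}"
  proof (intro allI impI)
    fix i j assume ij: "2 \<le> i \<and> i \<le> m + 1 \<and> m + 1 < j \<and> j \<le> n"
    then have "A (u j) (u i) = 0" using urad[of j] by (auto simp: rad_def)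
    then have "A (u i) (u j) = 0" using A_antisym[of "u i" "u j"] by simp
    then show "A (u i) (u j) \<in> module.span sV {A (u 1) (u i)}" using V.span_zero by simp
  qed
  have "\<not> U.dependent (u ` {1..n})" using uimg indS by simp
  moreover have "U.span (u ` {1..n}) = UNIV" using uimg spanS by auto
  ultimately show ?thesis using uinj G Star c2 c3 c4 by (intro exI[of _ u]) simp
qed

end

theorem proposition2p3:
  fixes sU :: "'f::field \<Rightarrow> 'u::ab_group_add \<Rightarrow> 'u"
    and sV :: "'f \<Rightarrow> 'v::ab_group_add \<Rightarrow> 'v"
    and A :: "'u \<Rightarrow> 'u \<Rightarrow> 'v"
    and n m :: nat
  assumes vsU: "vector_space sU" and vsV: "vector_space sV"
    and finU: "\<exists>S. finite S \<and> module.span sU S = UNIV"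
    and finV: "\<exists>S. finite S \<and> module.span sV S = UNIV"
    and dimU: "vector_space.dim sU (UNIV :: 'u set) = n"
    and dimV: "vector_space.dim sV (UNIV :: 'v set) = m"
    and lin1: "\<forall>x. Vector_Spaces.linear sU sV (\<lambda>y. A x y)"
    and lin2: "\<forall>y. Vector_Spaces.linear sU sV (\<lambda>x. A x y)"
    and alt: "\<forall>x. A x x = 0"
    and spans: "module.span sV {A x y | x y. True} = UNIV"
    and m_gt: "m > 2" and n_gt: "n > m + 1"
  shows "\<exists>u :: nat \<Rightarrow> 'u.
           inj_on u {1..n} \<and>
           \<not> module.dependent sU (u ` {1..n}) \<and>
           module.span sU (u ` {1..n}) = UNIV \<and>
           (\<not> tree_height_one n (greedy_B sV A u n) \<or>
            (greedy_B sV A u n = {(1, k) | k. 2 \<le> k \<and> k \<le> m + 1} \<and>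
             (\<forall>i. m + 2 \<le> i \<and> i \<le> n \<longrightarrow> A (u 1) (u i) = 0) \<and>
             (\<forall>i j. m + 1 < i \<and> i < j \<and> j \<le> n \<longrightarrow> A (u i) (u j) = 0) \<and>
             (\<forall>i j. 2 \<le> i \<and> i \<le> m + 1 \<and> m + 1 < j \<and> j \<le> n \<longrightarrow>
                A (u i) (u j) \<in> module.span sV {A (u 1) (u i)})))"
proof (cases "\<exists>x y z. ind3 sV (A x y) (A x z) (A y z)")
  case True
  then obtain x y z where tri: "ind3 sV (A x y) (A x z) (A y z)" by blast
  show ?thesis
    using case_tri[OF vsU vsV finU finV dimU dimV lin1 lin2 alt spans m_gt n_gt tri] by blast
next
  case False
  then have NT0: "\<forall>x y z. \<not> ind3 sV (A x y) (A x z) (A y z)" by blast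
  show ?thesis
    using case_star[OF vsU vsV finU finV dimU dimV lin1 lin2 alt spans m_gt n_gt NT0] by blast
qed

end
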